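(* For any two tensors $\mathcal{L}_0,\mathcal{E}_0\in\mathbb{R}^{N_1\times N_2\times N_3}$, if $\xi(\mathcal{L}_0)\,\mu(\mathcal{E}_0)<1$ then $T(\mathcal{L}_0)\cap\Omega(\mathcal{E}_0)=\{\mathbf{0}\}$.
   Context: For $\mathcal{A}\in\mathbb{R}^{N_1\times N_2\times N_3}$ write $A^{(k)}=\mathcal{A}(:,:,k)$ for its frontal slices. $\mathrm{bcirc}(\mathcal{A})\in\mathbb{R}^{N_1N_3\times N_2N_3}$ is the block circulant matrix whose $(i,j)$ block is $A^{(((i-j)\bmod N_3)+1)}$; $\mathrm{unfold}(\mathcal{A})$ stacks the frontal slices vertically and $\mathrm{fold}$ is its inverse. The t-product is $\mathcal{A}*\mathcal{B}=\mathrm{fold}(\mathrm{bcirc}(\mathcal{A})\,\mathrm{unfold}(\mathcal{B}))$. The transpose $\mathcal{A}^\top$ transposes each frontal slice and reverses the order of slices $2,\dots,N_3$. The identity tensor has first frontal slice the identity matrix and other slices zero; f-diagonal means every frontal slice is diagonal. Every $\mathcal{A}$ of tubal rank $R$ has a skinny t-SVD $\mathcal{A}=\mathcal{U}*\mathcal{S}*\mathcal{V}^\top$, $\mathcal{U}\in\mathbb{R}^{N_1\times R\times N_3}$, $\mathcal{V}\in\mathbb{R}^{N_2\times R\times N_3}$, $\mathcal{U}^\top*\mathcal{U}=\mathcal{V}^\top*\mathcal{V}=\mathcal{I}$, $\mathcal{S}\in\mathbb{R}^{R\times R\times N_3}$ f-diagonal. The tensor spectral norm is $\|\mathcal{A}\|=\|\mathrm{bcirc}(\mathcal{A})\|$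 (largest singular value); $\|\mathcal{A}\|_\infty=\max|\mathcal{A}(n_1,n_2,n_3)|$. $T(\mathcal{A})=\{\mathcal{U}*\mathcal{Y}^\top+\mathcal{W}*\mathcal{V}^\top:\mathcal{Y}\in\mathbb{R}^{N_2\times R\times N_3},\mathcal{W}\in\mathbb{R}^{N_1\times R\times N_3}\}$; $\Omega(\mathcal{A})=\{\mathcal{N}:\mathrm{support}(\mathcal{N})\subseteq\mathrm{support}(\mathcal{A})\}$. Define $\xi(\mathcal{A})=\max_{\mathcal{N}\in T(\mathcal{A}),\|\mathcal{N}\|\le1}\|\mathcal{N}\|_\infty$ and $\mu(\mathcal{A})=\max_{\mathcal{N}\in\Omega(\mathcal{A}),\|\mathcal{N}\|_\infty\le1}\|\mathcal{N}\|$. *)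

theory Defs
  imports Complex_Main
begin

text \<open>Tensors in R^(N1 x N2 x N3) are represented as functions nat => nat => nat => real,
  0-indexed, and required to vanish outside the index box.
  Frontal slice k (0-based) is A(:,:,k).\<close>

type_synonym tensor = "nat \<Rightarrow> nat \<Rightarrow> nat \<Rightarrow> real"
type_synonym mat = "nat \<Rightarrow> nat \<Rightarrow> real"

definition is_tensor :: "nat \<Rightarrow> nat \<Rightarrow> nat \<Rightarrow> tensor \<Rightarrow> bool" where
  "is_tensor N1 N2 N3 A \<longleftrightarrow>
     (\<forall>i j k. \<not> (i < N1 \<and> j < N2 \<and> k < N3) \<longrightarrow> A i j k = 0)"

definition zero_tensor :: tensor where
  "zero_tensor = (\<lambda>_ _ _. 0)"

definition tadd :: "tensor \<Rightarrow> tensor \<Rightarrow> tensor" where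
  "tadd A B = (\<lambda>i j k. A i j k + B i j k)"

text \<open>Block circulant matrix (N1*N3) x (N2*N3): block (p,q) (0-based) is slice ((p - q) mod N3).\<close>
definition bcirc :: "nat \<Rightarrow> nat \<Rightarrow> nat \<Rightarrow> tensor \<Rightarrow> mat" where
  "bcirc N1 N2 N3 A = (\<lambda>r c.
     if r < N1 * N3 \<and> c < N2 * N3
     then A (r mod N1) (c mod N2) (nat ((int (r div N1) - int (c div N2)) mod int N3))
     else 0)"

definition unfold :: "nat \<Rightarrow> nat \<Rightarrow> nat \<Rightarrow> tensor \<Rightarrow> mat" where
  "unfold N1 N2 N3 A = (\<lambda>r c.
     if r < N1 * N3 \<and> c < N2 then A (r mod N1) c (r div N1) else 0)"

definition fold :: "nat \<Rightarrow> nat \<Rightarrow> nat \<Rightarrow> mat \<Rightarrow> tensor" where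
  "fold N1 N2 N3 M = (\<lambda>i j k.
     if i < N1 \<and> j < N2 \<and> k < N3 then M (k * N1 + i) j else 0)"

definition matmul :: "nat \<Rightarrow> mat \<Rightarrow> mat \<Rightarrow> mat" where
  "matmul K M L = (\<lambda>r c. \<Sum>t<K. M r t * L t c)"

definition tprod :: "nat \<Rightarrow> nat \<Rightarrow> nat \<Rightarrow> nat \<Rightarrow> tensor \<Rightarrow> tensor \<Rightarrow> tensor" where
  "tprod N1 N2 N3 N4 A B =
     fold N1 N4 N3 (matmul (N2 * N3) (bcirc N1 N2 N3 A) (unfold N2 N4 N3 B))"

text \<open>Tensor transpose of A in R^(N1 x N2 x N3): transpose each slice and reverse slices 2..N3.\<close>
definition ttrans :: "nat \<Rightarrow> nat \<Rightarrow> nat \<Rightarrow> tensor \<Rightarrow> tensor" where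
  "ttrans N1 N2 N3 A = (\<lambda>i j k.
     if i < N2 \<and> j < N1 \<and> k < N3 then A j i ((N3 - k) mod N3) else 0)"

definition tidentity :: "nat \<Rightarrow> nat \<Rightarrow> tensor" where
  "tidentity R N3 = (\<lambda>i j k. if i < R \<and> j < R \<and> k < N3 \<and> k = 0 \<and> i = j then 1 else 0)"

definition f_diagonal :: "tensor \<Rightarrow> bool" where
  "f_diagonal S \<longleftrightarrow> (\<forall>i j k. i \<noteq> j \<longrightarrow> S i j k = 0)"

text \<open>Skinny t-SVD A = U * S * V^T with R = tubal rank (all R diagonal tubes of S nonzero).\<close>
definition skinny_tsvd ::
  "nat \<Rightarrow> nat \<Rightarrow> nat \<Rightarrow> tensor \<Rightarrow> nat \<Rightarrow> tensor \<Rightarrow> tensor \<Rightarrow> tensor \<Rightarrow> bool" where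
  "skinny_tsvd N1 N2 N3 A R U S V \<longleftrightarrow>
     is_tensor N1 R N3 U \<and> is_tensor R R N3 S \<and> is_tensor N2 R N3 V \<and>
     A = tprod N1 R N3 N2 (tprod N1 R N3 R U S) (ttrans N2 R N3 V) \<and>
     tprod R N1 N3 R (ttrans N1 R N3 U) U = tidentity R N3 \<and>
     tprod R N2 N3 R (ttrans N2 R N3 V) V = tidentity R N3 \<and>
     f_diagonal S \<and>
     (\<forall>i<R. \<exists>k<N3. S i i k \<noteq> 0)"

text \<open>Largest singular value of an m x n matrix = its operator 2-norm.\<close>
definition opnorm2 :: "nat \<Rightarrow> nat \<Rightarrow> mat \<Rightarrow> real" where
  "opnorm2 m n M = Sup {sqrt (\<Sum>r<m. (\<Sum>c<n. M r c * x c)\<^sup>2) | x.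
                          (\<Sum>c<n. (x c)\<^sup>2) \<le> 1}"

definition specnorm :: "nat \<Rightarrow> nat \<Rightarrow> nat \<Rightarrow> tensor \<Rightarrow> real" where
  "specnorm N1 N2 N3 A = opnorm2 (N1 * N3) (N2 * N3) (bcirc N1 N2 N3 A)"

definition infnorm :: "nat \<Rightarrow> nat \<Rightarrow> nat \<Rightarrow> tensor \<Rightarrow> real" where
  "infnorm N1 N2 N3 A =
     Max (insert 0 {\<bar>A i j k\<bar> | i j k. i < N1 \<and> j < N2 \<and> k < N3})"

text \<open>Tangent space T(A), given the skinny t-SVD factors U (N1 x R x N3), V (N2 x R x N3).\<close>
definition Tspace :: "nat \<Rightarrow> nat \<Rightarrow> nat \<Rightarrow> nat \<Rightarrow> tensor \<Rightarrow> tensor \<Rightarrow> tensor set" where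
  "Tspace N1 N2 N3 R U V =
     {tadd (tprod N1 R N3 N2 U (ttrans N2 R N3 Y)) (tprod N1 R N3 N2 W (ttrans N2 R N3 V)) | Y W.
        is_tensor N2 R N3 Y \<and> is_tensor N1 R N3 W}"

definition Omega :: "nat \<Rightarrow> nat \<Rightarrow> nat \<Rightarrow> tensor \<Rightarrow> tensor set" where
  "Omega N1 N2 N3 A =
     {N. is_tensor N1 N2 N3 N \<and> (\<forall>i j k. N i j k \<noteq> 0 \<longrightarrow> A i j k \<noteq> 0)}"

definition xi :: "nat \<Rightarrow> nat \<Rightarrow> nat \<Rightarrow> nat \<Rightarrow> tensor \<Rightarrow> tensor \<Rightarrow> real" where
  "xi N1 N2 N3 R U V =
     Sup {infnorm N1 N2 N3 N | N. N \<in> Tspace N1 N2 N3 R U V \<and> specnorm N1 N2 N3 N \<le> 1}"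

definition mu :: "nat \<Rightarrow> nat \<Rightarrow> nat \<Rightarrow> tensor \<Rightarrow> real" where
  "mu N1 N2 N3 A =
     Sup {specnorm N1 N2 N3 N | N. N \<in> Omega N1 N2 N3 A \<and> infnorm N1 N2 N3 N \<le> 1}"

end

theory Submission
  imports Defs
begin

definition tscale :: "real \<Rightarrow> tensor \<Rightarrow> tensor" where
  "tscale a A = (\<lambda>i j k. a * A i j k)"

lemma opnorm2_row_bound:
  fixes m n :: nat and M :: mat and x :: "nat \<Rightarrow> real"
  assumes "(\<Sum>c<n. (x c)\<^sup>2) \<le> 1"
  shows "sqrt (\<Sum>r<m. (\<Sum>c<n. M r c * x c)\<^sup>2) \<le> sqrt (\<Sum>r<m. (\<Sum>c<n. \<bar>M r c\<bar>)\<^sup>2)"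
proof -
  have xc: "\<bar>x c\<bar> \<le> 1" if "c < n" for c
  proof -
    have "(x c)\<^sup>2 \<le> (\<Sum>c<n. (x c)\<^sup>2)"
      using that by (intro member_le_sum) auto
    then have "(x c)\<^sup>2 \<le> 1" using assms by linarith
    then show ?thesis by (simp add: abs_square_le_1)
  qed
  have "(\<Sum>c<n. M r c * x c)\<^sup>2 \<le> (\<Sum>c<n. \<bar>M r c\<bar>)\<^sup>2" for r
  proof -
    have "\<bar>\<Sum>c<n. M r c * x c\<bar> \<le> (\<Sum>c<n. \<bar>M r c * x c\<bar>)" by (rule sum_abs)
    also have "\<dots> \<le> (\<Sum>c<n. \<bar>M r c\<bar>)"
    proof (rule sum_mono)
      fix c assume "c \<in> {..<n}"
      then have "\<bar>x c\<bar> \<le> 1" using xc by auto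
      then show "\<bar>M r c * x c\<bar> \<le> \<bar>M r c\<bar>"
        by (simp add: abs_mult mult_left_le)
    qed
    finally have "\<bar>\<Sum>c<n. M r c * x c\<bar> \<le> (\<Sum>c<n. \<bar>M r c\<bar>)" .
    then have "\<bar>\<Sum>c<n. M r c * x c\<bar>\<^sup>2 \<le> (\<Sum>c<n. \<bar>M r c\<bar>)\<^sup>2"
      by (rule power_mono) simp
    then show ?thesis by simp
  qed
  then have "(\<Sum>r<m. (\<Sum>c<n. M r c * x c)\<^sup>2) \<le> (\<Sum>r<m. (\<Sum>c<n. \<bar>M r c\<bar>)\<^sup>2)"
    by (intro sum_mono)
  then show ?thesis by (rule real_sqrt_le_mono)
qed

lemma opnorm2_bdd:
  fixes m n :: nat and M :: mat
  shows "bdd_above {sqrt (\<Sum>r<m. (\<Sum>c<n. M r c * x c)\<^sup>2) | x :: nat \<Rightarrow> real. (\<Sum>c<n. (x c)\<^sup>2) \<le> 1}"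
  unfolding bdd_above_def using opnorm2_row_bound by blast

lemma opnorm2_mem:
  fixes m n :: nat and M :: mat and x :: "nat \<Rightarrow> real"
  assumes "(\<Sum>c<n. (x c)\<^sup>2) \<le> 1"
  shows "sqrt (\<Sum>r<m. (\<Sum>c<n. M r c * x c)\<^sup>2) \<in> {sqrt (\<Sum>r<m. (\<Sum>c<n. M r c * x c)\<^sup>2) | x. (\<Sum>c<n. (x c)\<^sup>2) \<le> 1}"
  unfolding mem_Collect_eq by (rule exI[of _ x], rule conjI[OF refl assms])

lemma opnorm2_upper:
  fixes m n :: nat and M :: mat and x :: "nat \<Rightarrow> real"
  assumes "(\<Sum>c<n. (x c)\<^sup>2) \<le> 1"
  shows "sqrt (\<Sum>r<m. (\<Sum>c<n. M r c * x c)\<^sup>2) \<le> opnorm2 m n M"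
  unfolding opnorm2_def
  by (rule cSup_upper[OF opnorm2_mem[OF assms] opnorm2_bdd])

lemma opnorm2_least:
  fixes m n :: nat and M :: mat
  assumes "\<And>x :: nat \<Rightarrow> real. (\<Sum>c<n. (x c)\<^sup>2) \<le> 1 \<Longrightarrow> sqrt (\<Sum>r<m. (\<Sum>c<n. M r c * x c)\<^sup>2) \<le> b"
  shows "opnorm2 m n M \<le> b"
  unfolding opnorm2_def
proof (rule cSup_least)
  have "(\<Sum>c<n. ((\<lambda>_. 0::real) c)\<^sup>2) \<le> 1" by simp
  from opnorm2_mem[OF this, where m=m and M=M]
  show "{sqrt (\<Sum>r<m. (\<Sum>c<n. M r c * x c)\<^sup>2) | x. (\<Sum>c<n. (x c)\<^sup>2) \<le> 1} \<noteq> {}"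
    by (metis empty_iff)
next
  fix y assume "y \<in> {sqrt (\<Sum>r<m. (\<Sum>c<n. M r c * x c)\<^sup>2) | x. (\<Sum>c<n. (x c)\<^sup>2) \<le> 1}"
  then obtain x :: "nat \<Rightarrow> real" where "y = sqrt (\<Sum>r<m. (\<Sum>c<n. M r c * x c)\<^sup>2)" and hx: "(\<Sum>c<n. (x c)\<^sup>2) \<le> 1"
    unfolding mem_Collect_eq by (elim exE conjE)
  then show "y \<le> b" using assms[OF hx] by (simp only:)
qed

lemma opnorm2_nonneg:
  fixes m n :: nat and M :: mat
  shows "0 \<le> opnorm2 m n M"
proof -
  have "sqrt (\<Sum>r<m. (\<Sum>c<n. M r c * (\<lambda>_. 0) c)\<^sup>2) \<le> opnorm2 m n M"
    by (rule opnorm2_upper) simp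
  then show ?thesis by simp
qed

lemma opnorm2_le_rowbound:
  fixes m n :: nat and M :: mat
  shows "opnorm2 m n M \<le> sqrt (\<Sum>r<m. (\<Sum>c<n. \<bar>M r c\<bar>)\<^sup>2)"
  by (rule opnorm2_least) (rule opnorm2_row_bound)

lemma sqrt_scale:
  fixes m n :: nat and M :: mat and x :: "nat \<Rightarrow> real"
  assumes "0 \<le> a"
  shows "sqrt (\<Sum>r<m. (\<Sum>c<n. a * M r c * x c)\<^sup>2) = a * sqrt (\<Sum>r<m. (\<Sum>c<n. M r c * x c)\<^sup>2)"
proof -
  have e: "(\<Sum>c<n. a * M r c * x c) = a * (\<Sum>c<n. M r c * x c)" for r
    by (simp only: sum_distrib_left mult.assoc)
  have "(\<Sum>r<m. (\<Sum>c<n. a * M r c * x c)\<^sup>2) = (\<Sum>r<m. a\<^sup>2 * (\<Sum>c<n. M r c * x c)\<^sup>2)"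
    by (simp only: e power_mult_distrib)
  also have "\<dots> = a\<^sup>2 * (\<Sum>r<m. (\<Sum>c<n. M r c * x c)\<^sup>2)"
    by (simp only: sum_distrib_left)
  finally have "(\<Sum>r<m. (\<Sum>c<n. a * M r c * x c)\<^sup>2) = a\<^sup>2 * (\<Sum>r<m. (\<Sum>c<n. M r c * x c)\<^sup>2)" .
  then show ?thesis using assms by (simp add: real_sqrt_mult)
qed

lemma opnorm2_scale:
  fixes m n :: nat and M :: mat
  assumes "0 \<le> a"
  shows "opnorm2 m n (\<lambda>r c. a * M r c) = a * opnorm2 m n M"
proof (rule antisym)
  show "opnorm2 m n (\<lambda>r c. a * M r c) \<le> a * opnorm2 m n M"
  proof (rule opnorm2_least)
    fix x :: "nat \<Rightarrow> real" assume "(\<Sum>c<n. (x c)\<^sup>2) \<le> 1"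
    then have "sqrt (\<Sum>r<m. (\<Sum>c<n. M r c * x c)\<^sup>2) \<le> opnorm2 m n M" by (rule opnorm2_upper)
    then show "sqrt (\<Sum>r<m. (\<Sum>c<n. a * M r c * x c)\<^sup>2) \<le> a * opnorm2 m n M"
      using assms by (simp add: sqrt_scale mult_left_mono)
  qed
next
  show "a * opnorm2 m n M \<le> opnorm2 m n (\<lambda>r c. a * M r c)"
  proof (cases "a = 0")
    case True then show ?thesis using opnorm2_nonneg by simp
  next
    case False
    then have ap: "a > 0" using assms by simp
    have "opnorm2 m n M \<le> opnorm2 m n (\<lambda>r c. a * M r c) / a"
    proof (rule opnorm2_least)
      fix x :: "nat \<Rightarrow> real" assume "(\<Sum>c<n. (x c)\<^sup>2) \<le> 1"
      then have "sqrt (\<Sum>r<m. (\<Sum>c<n. a * M r c * x c)\<^sup>2) \<le> opnorm2 m n (\<lambda>r c. a * M r c)"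
        by (rule opnorm2_upper)
      then have "a * sqrt (\<Sum>r<m. (\<Sum>c<n. M r c * x c)\<^sup>2) \<le> opnorm2 m n (\<lambda>r c. a * M r c)"
        by (simp only: sqrt_scale[OF assms])
      then show "sqrt (\<Sum>r<m. (\<Sum>c<n. M r c * x c)\<^sup>2) \<le> opnorm2 m n (\<lambda>r c. a * M r c) / a"
        using ap by (simp add: pos_le_divide_eq mult.commute)
    qed
    then show ?thesis using ap by (simp add: field_simps)
  qed
qed

lemma opnorm2_entry:
  fixes m n :: nat and M :: mat
  assumes "r0 < m" "c0 < n"
  shows "\<bar>M r0 c0\<bar> \<le> opnorm2 m n M"
proof -
  define x where "x = (\<lambda>c. if c = c0 then 1 else (0::real))"
  have xx: "(\<lambda>c. (x c)\<^sup>2) = x" by (auto simp: x_def fun_eq_iff)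
  have s1: "(\<Sum>c<n. (x c)\<^sup>2) = 1" using assms(2) unfolding xx unfolding x_def
    by (simp add: sum.delta)
  have s2: "(\<Sum>c<n. M r c * x c) = M r c0" for r using assms(2) unfolding x_def
    by (simp add: if_distrib cong: if_cong)
  have "\<bar>M r0 c0\<bar> = sqrt ((M r0 c0)\<^sup>2)" by simp
  also have "\<dots> \<le> sqrt (\<Sum>r<m. (M r c0)\<^sup>2)"
    by (intro real_sqrt_le_mono member_le_sum[where f="\<lambda>r. (M r c0)\<^sup>2"]) (use assms in auto)
  also have "\<dots> = sqrt (\<Sum>r<m. (\<Sum>c<n. M r c * x c)\<^sup>2)" by (simp add: s2)
  also have "\<dots> \<le> opnorm2 m n M" by (rule opnorm2_upper) (simp add: s1)
  finally show ?thesis .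
qed

lemma infnorm_finite:
  fixes A :: tensor and N1 N2 N3 :: nat
  shows "finite {\<bar>A i j k\<bar> | i j k. i < N1 \<and> j < N2 \<and> k < N3}"
proof -
  have "{\<bar>A i j k\<bar> | i j k. i < N1 \<and> j < N2 \<and> k < N3}
        \<subseteq> (\<lambda>(i,j,k). \<bar>A i j k\<bar>) ` ({..<N1} \<times> {..<N2} \<times> {..<N3})" by force
  then show ?thesis by (rule finite_subset) (intro finite_imageI finite_cartesian_product; simp)
qed

lemma infnorm_ge:
  assumes "i < N1" "j < N2" "k < N3"
  shows "\<bar>A i j k\<bar> \<le> infnorm N1 N2 N3 A"
  unfolding infnorm_def
  by (rule Max_ge) (use infnorm_finite assms in auto)

lemma infnorm_nonneg: "0 \<le> infnorm N1 N2 N3 A"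
  unfolding infnorm_def
  by (rule Max_ge) (use infnorm_finite in auto)

lemma infnorm_le:
  assumes "0 \<le> b" "\<And>i j k. i < N1 \<Longrightarrow> j < N2 \<Longrightarrow> k < N3 \<Longrightarrow> \<bar>A i j k\<bar> \<le> b"
  shows "infnorm N1 N2 N3 A \<le> b"
  unfolding infnorm_def
  using infnorm_finite[of A N1 N2 N3] assms by (auto simp: Max_le_iff)

lemma infnorm_scale:
  assumes "0 \<le> a"
  shows "infnorm N1 N2 N3 (tscale a A) = a * infnorm N1 N2 N3 A"
proof (rule antisym)
  show "infnorm N1 N2 N3 (tscale a A) \<le> a * infnorm N1 N2 N3 A"
    by (rule infnorm_le) (use assms infnorm_nonneg infnorm_ge in
        \<open>auto simp: tscale_def abs_mult intro!: mult_left_mono\<close>)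
next
  show "a * infnorm N1 N2 N3 A \<le> infnorm N1 N2 N3 (tscale a A)"
  proof (cases "a = 0")
    case True then show ?thesis using infnorm_nonneg by simp
  next
    case False
    then have ap: "a > 0" using assms by simp
    have "infnorm N1 N2 N3 A \<le> infnorm N1 N2 N3 (tscale a A) / a"
    proof (rule infnorm_le)
      show "0 \<le> infnorm N1 N2 N3 (tscale a A) / a" using ap infnorm_nonneg by simp
      fix i j k assume h: "i < N1" "j < N2" "k < N3"
      have "\<bar>a * A i j k\<bar> \<le> infnorm N1 N2 N3 (tscale a A)"
        using infnorm_ge[OF h, of "tscale a A"] by (simp add: tscale_def)
      then show "\<bar>A i j k\<bar> \<le> infnorm N1 N2 N3 (tscale a A) / a"
        using ap by (simp add: field_simps abs_mult)
    qed
    then show ?thesis using ap by (simp add: field_simps)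
  qed
qed

lemma bcirc_scale: "bcirc N1 N2 N3 (tscale a A) = (\<lambda>r c. a * bcirc N1 N2 N3 A r c)"
  by (auto simp: bcirc_def tscale_def fun_eq_iff)

lemma specnorm_scale:
  assumes "0 \<le> a"
  shows "specnorm N1 N2 N3 (tscale a A) = a * specnorm N1 N2 N3 A"
  unfolding specnorm_def bcirc_scale using opnorm2_scale[OF assms] by simp

lemma specnorm_nonneg: "0 \<le> specnorm N1 N2 N3 A"
  unfolding specnorm_def by (rule opnorm2_nonneg)

lemma specnorm_entry:
  assumes "i < N1" "j < N2" "k < N3"
  shows "\<bar>A i j k\<bar> \<le> specnorm N1 N2 N3 A"
proof -
  have r: "k * N1 + i < N1 * N3"
  proof -
    have "k * N1 + i < k * N1 + N1" using assms by simp
    also have "\<dots> = (k + 1) * N1" by simp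
    also have "\<dots> \<le> N3 * N1" using assms by (intro mult_right_mono) auto
    finally show ?thesis by (simp add: mult.commute)
  qed
  have "N2 * 1 \<le> N2 * N3" using assms(3) by (intro mult_le_mono2) simp
  then have c: "j < N2 * N3" using assms(2) by linarith
  have "bcirc N1 N2 N3 A (k * N1 + i) j = A i j k"
    using assms r c by (simp add: bcirc_def)
  then show ?thesis
    using opnorm2_entry[OF r c, of "bcirc N1 N2 N3 A"] unfolding specnorm_def by simp
qed

lemma infnorm_le_specnorm: "infnorm N1 N2 N3 A \<le> specnorm N1 N2 N3 A"
  by (rule infnorm_le) (auto simp: specnorm_nonneg specnorm_entry)

lemma bcirc_entry_le: "\<bar>bcirc N1 N2 N3 A r c\<bar> \<le> infnorm N1 N2 N3 A"
proof (cases "r < N1 * N3 \<and> c < N2 * N3")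
  case True
  then have p: "N1 > 0" "N2 > 0" "N3 > 0" by (auto intro: gr0I)
  have "nat ((int (r div N1) - int (c div N2)) mod int N3) < N3"
    using p by (simp add: nat_less_iff)
  moreover have "r mod N1 < N1" "c mod N2 < N2" using p by auto
  ultimately have "\<bar>A (r mod N1) (c mod N2) (nat ((int (r div N1) - int (c div N2)) mod int N3))\<bar> \<le> infnorm N1 N2 N3 A"
    by (intro infnorm_ge)
  then show ?thesis using True by (simp add: bcirc_def)
next
  case False then show ?thesis by (auto simp: bcirc_def infnorm_nonneg)
qed

lemma specnorm_bound:
  "specnorm N1 N2 N3 A \<le> sqrt (real (N1*N3) * (real (N2*N3) * infnorm N1 N2 N3 A)\<^sup>2)"
proof -
  let ?M = "bcirc N1 N2 N3 A" and ?K = "infnorm N1 N2 N3 A"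
  have "(\<Sum>c<N2*N3. \<bar>?M r c\<bar>) \<le> (\<Sum>c<N2*N3. ?K)" for r
    by (rule sum_mono) (rule bcirc_entry_le)
  then have "(\<Sum>c<N2*N3. \<bar>?M r c\<bar>)\<^sup>2 \<le> (real (N2*N3) * ?K)\<^sup>2" for r
    by (intro power_mono) (auto intro: sum_nonneg)
  then have "(\<Sum>r<N1*N3. (\<Sum>c<N2*N3. \<bar>?M r c\<bar>)\<^sup>2) \<le> (\<Sum>r<N1*N3. (real (N2*N3) * ?K)\<^sup>2)"
    by (intro sum_mono) auto
  then have "sqrt (\<Sum>r<N1*N3. (\<Sum>c<N2*N3. \<bar>?M r c\<bar>)\<^sup>2) \<le> sqrt (real (N1*N3) * (real (N2*N3) * ?K)\<^sup>2)"
    by (intro real_sqrt_le_mono) simp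
  then show ?thesis unfolding specnorm_def using opnorm2_le_rowbound[of "N1*N3" "N2*N3" ?M] by linarith
qed

lemma ttrans_scale: "ttrans N1 N2 N3 (tscale a Y) = tscale a (ttrans N1 N2 N3 Y)"
  by (auto simp: ttrans_def tscale_def fun_eq_iff)

lemma tprod_scale_right: "tprod N1 N2 N3 N4 A (tscale a B) = tscale a (tprod N1 N2 N3 N4 A B)"
  by (auto simp: tprod_def fold_def matmul_def unfold_def tscale_def fun_eq_iff sum_distrib_left
      intro!: sum.cong)

lemma tprod_scale_left: "tprod N1 N2 N3 N4 (tscale a A) B = tscale a (tprod N1 N2 N3 N4 A B)"
  unfolding tprod_def bcirc_scale
  by (auto simp: fold_def matmul_def tscale_def fun_eq_iff sum_distrib_left
      intro!: sum.cong)

lemma is_tensor_scale: "is_tensor N1 N2 N3 Y \<Longrightarrow> is_tensor N1 N2 N3 (tscale a Y)"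
  by (simp add: is_tensor_def tscale_def)

lemma Tspace_scale:
  assumes "N \<in> Tspace N1 N2 N3 R U V"
  shows "tscale a N \<in> Tspace N1 N2 N3 R U V"
proof -
  obtain Y W where N: "N = tadd (tprod N1 R N3 N2 U (ttrans N2 R N3 Y)) (tprod N1 R N3 N2 W (ttrans N2 R N3 V))"
    and Y: "is_tensor N2 R N3 Y" and W: "is_tensor N1 R N3 W"
    using assms unfolding Tspace_def by blast
  have "tscale a N = tadd (tprod N1 R N3 N2 U (ttrans N2 R N3 (tscale a Y))) (tprod N1 R N3 N2 (tscale a W) (ttrans N2 R N3 V))"
    unfolding N ttrans_scale tprod_scale_right tprod_scale_left
    by (simp add: tadd_def tscale_def fun_eq_iff distrib_left)
  then show ?thesis unfolding Tspace_def mem_Collect_eq using is_tensor_scale[OF Y] is_tensor_scale[OF W]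
    by (intro exI conjI) assumption+
qed

lemma Omega_scale:
  assumes "N \<in> Omega N1 N2 N3 E"
  shows "tscale a N \<in> Omega N1 N2 N3 E"
  using assms by (auto simp: Omega_def tscale_def is_tensor_def)

lemma zero_Tspace: "zero_tensor \<in> Tspace N1 N2 N3 R U V"
proof -
  have "zero_tensor = tadd (tprod N1 R N3 N2 U (ttrans N2 R N3 zero_tensor)) (tprod N1 R N3 N2 zero_tensor (ttrans N2 R N3 V))"
    by (simp add: tadd_def tprod_def fold_def matmul_def unfold_def ttrans_def bcirc_def zero_tensor_def fun_eq_iff)
  moreover have "is_tensor N2 R N3 zero_tensor" "is_tensor N1 R N3 zero_tensor"
    by (auto simp: is_tensor_def zero_tensor_def)
  ultimately show ?thesis unfolding Tspace_def mem_Collect_eq by (intro exI conjI) assumption+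
qed

lemma zero_Omega: "zero_tensor \<in> Omega N1 N2 N3 E"
  by (simp add: Omega_def is_tensor_def zero_tensor_def)

theorem lemma2:
  fixes N1 N2 N3 R :: nat and L0 E0 U S V :: tensor
  assumes "is_tensor N1 N2 N3 L0"
    and "is_tensor N1 N2 N3 E0"
    and "skinny_tsvd N1 N2 N3 L0 R U S V"
    and "xi N1 N2 N3 R U V * mu N1 N2 N3 E0 < 1"
  shows "Tspace N1 N2 N3 R U V \<inter> Omega N1 N2 N3 E0 = {zero_tensor}"
proof -
  have "N = zero_tensor" if NT: "N \<in> Tspace N1 N2 N3 R U V" and NO: "N \<in> Omega N1 N2 N3 E0" for N
  proof (rule ccontr)
    assume "N \<noteq> zero_tensor"
    then obtain i j k where nz: "N i j k \<noteq> 0" by (auto simp: zero_tensor_def fun_eq_iff)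
    have box: "i < N1" "j < N2" "k < N3" using NO nz unfolding Omega_def is_tensor_def by blast+
    define a where "a = infnorm N1 N2 N3 N"
    define s where "s = specnorm N1 N2 N3 N"
    have ap: "a > 0" using infnorm_ge[OF box, of N] nz unfolding a_def by linarith
    have sa: "a \<le> s" unfolding a_def s_def by (rule infnorm_le_specnorm)
    then have sp: "s > 0" using ap by linarith
    let ?XS = "{infnorm N1 N2 N3 N | N. N \<in> Tspace N1 N2 N3 R U V \<and> specnorm N1 N2 N3 N \<le> 1}"
    have bx: "bdd_above ?XS"
    proof (rule bdd_aboveI)
      fix y assume "y \<in> ?XS"
      then obtain M where "y = infnorm N1 N2 N3 M" "specnorm N1 N2 N3 M \<le> 1" by blast
      then show "y \<le> 1" using infnorm_le_specnorm[of N1 N2 N3 M] by linarith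
    qed
    have "tscale (1/s) N \<in> Tspace N1 N2 N3 R U V" by (rule Tspace_scale[OF NT])
    moreover have "specnorm N1 N2 N3 (tscale (1/s) N) \<le> 1"
      using sp by (simp add: specnorm_scale s_def[symmetric])
    ultimately have "infnorm N1 N2 N3 (tscale (1/s) N) \<in> ?XS" by blast
    then have "infnorm N1 N2 N3 (tscale (1/s) N) \<le> xi N1 N2 N3 R U V"
      unfolding xi_def using bx by (rule cSup_upper)
    then have xi: "a / s \<le> xi N1 N2 N3 R U V"
      using sp by (simp add: infnorm_scale a_def)
    let ?MS = "{specnorm N1 N2 N3 N | N. N \<in> Omega N1 N2 N3 E0 \<and> infnorm N1 N2 N3 N \<le> 1}"
    have bm: "bdd_above ?MS"
    proof -
      have B: "specnorm N1 N2 N3 M \<le> sqrt (real (N1*N3) * (real (N2*N3) * 1)\<^sup>2)"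
        if "infnorm N1 N2 N3 M \<le> 1" for M
      proof -
        have "(real (N2*N3) * infnorm N1 N2 N3 M)\<^sup>2 \<le> (real (N2*N3) * 1)\<^sup>2"
          using that infnorm_nonneg by (intro power_mono mult_left_mono) auto
        then have "sqrt (real (N1*N3) * (real (N2*N3) * infnorm N1 N2 N3 M)\<^sup>2)
               \<le> sqrt (real (N1*N3) * (real (N2*N3) * 1)\<^sup>2)"
          by (intro real_sqrt_le_mono mult_left_mono) auto
        then show ?thesis using specnorm_bound[of N1 N2 N3 M] by linarith
      qed
      show ?thesis
      proof (rule bdd_aboveI)
        fix y assume "y \<in> ?MS"
        then obtain M where "y = specnorm N1 N2 N3 M" "infnorm N1 N2 N3 M \<le> 1" by blast
        then show "y \<le> sqrt (real (N1*N3) * (real (N2*N3) * 1)\<^sup>2)" using B by simp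
      qed
    qed
    have "tscale (1/a) N \<in> Omega N1 N2 N3 E0" by (rule Omega_scale[OF NO])
    moreover have "infnorm N1 N2 N3 (tscale (1/a) N) \<le> 1"
      using ap by (simp add: infnorm_scale a_def[symmetric])
    ultimately have "specnorm N1 N2 N3 (tscale (1/a) N) \<in> ?MS" by blast
    then have "specnorm N1 N2 N3 (tscale (1/a) N) \<le> mu N1 N2 N3 E0"
      unfolding mu_def using bm by (rule cSup_upper)
    then have mu: "s / a \<le> mu N1 N2 N3 E0"
      using ap by (simp add: specnorm_scale s_def)
    have "(a / s) * (s / a) \<le> xi N1 N2 N3 R U V * mu N1 N2 N3 E0"
    proof (rule mult_mono)
      have "0 < a / s" using ap sp by simp
      then show "0 \<le> xi N1 N2 N3 R U V" using xi by linarith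
      show "0 \<le> s / a" using ap sp by simp
    qed (use xi mu in auto)
    moreover have "(a / s) * (s / a) = 1" using ap sp by simp
    ultimately show False using assms(4) by linarith
  qed
  then show ?thesis using zero_Tspace zero_Omega by blast
qed

end
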